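(* Let $P$ be a definite logic program, let $p(t_1,\ldots,t_n)$ be an atom, let $X_1,\ldots,X_n$ be distinct fresh variables, and let $\mathcal{C}_0=\langle p(t_1,\ldots,t_n)_{id} \;]\![\; p(X_1,\ldots,X_n)_{id}\rangle$ be the corresponding initial concolic state. Let $\mathcal{C}_0\leadsto\mathcal{C}_1\leadsto\cdots\leadsto\mathcal{C}_m$, $m\geq 0$, be a finite (possibly incomplete) concolic execution for $\mathcal{C}_0$ in $P$. Then for every $i\in\{0,\ldots,m\}$ such that $\mathcal{C}_i$ has the form $\langle \mathcal{B}^{c}_{\delta}\mid S \;]\![\; \mathcal{D}^{c'}_{\theta}\mid S'\rangle$ (the clause labels $c,c'$ possibly absent), the following hold: $|S|=|S'|$; $\mathcal{D}\leqslant\mathcal{B}$; $c=c'$ (when these labels are present); and $p(X_1,\ldots,X_n)\theta\leqslant p(t_1,\ldots,t_n)\delta$.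
   Context: Programs are definite logic programs; every clause $c$ has a unique label $\ell(c)$. Goals are conjunctions of atoms (including the special atoms $\mathsf{true}$ and $\mathsf{fail}$). For syntactic objects $s_1,s_2$, $s_1\leqslant s_2$ ("$s_1$ is more general than $s_2$") means $s_1\theta=s_2$ for some substitution $\theta$. For an atom $A$, $\mathsf{clauses}(A,P)$ is the sequence (in program order) of renamed-apart clauses of $P$ whose heads unify with $A$. A concolic state has the form $\langle S\;]\![\; S'\rangle$ where $S$ (concrete part) and $S'$ (symbolic part) are sequences, separated by $\mid$, of goals each labeled with a substitution and possibly additionally with a program clause, written $\mathcal{B}_\delta$ or $\mathcal{B}^{c}_\delta$; $id$ is the identity substitution; $\textsc{success}_\delta$ and $\textsc{fail}_\delta$ denote final goals; $\epsilon$ is the empty sequence. The concolic transition relation $\leadsto$ is given by the rules: (success) $\langle \mathsf{true}_\delta\mid S\;]\![\;\mathsf{true}_\theta\mid S'\rangle\leadsto\langle\textsc{success}_\delta\;]\![\;\textsc{success}_\theta\rangle$. (failure) $\langle(\mathsf{fail},\mathcal{B})_\delta\;]\![\;(\mathsf{fail},\mathcal{B}')_\theta\rangle\leadsto\langle\textsc{fail}_\delta\;]\![\;\textsc{fail}_\theta\rangle$. (backtrack) if $S\neq\epsilon$: $\langle(\mathsf{fail},\mathcal{B})_\delta\mid S\;]\![\;(\mathsf{fail},\mathcal{B}')_\theta\mid S'\rangle\leadsto\langle S\;]\![\;S'\rangle$. (choice) if $\mathsf{clauses}(A,P)=c_1,\ldots,c_n$ with $n>0$: $\langle (A,\mathcal{B})_\delta\mid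 S\;]\![\;(A',\mathcal{B}')_\theta\mid S'\rangle\leadsto\langle (A,\mathcal{B})^{c_1}_\delta\mid\cdots\mid(A,\mathcal{B})^{c_n}_\delta\mid S\;]\![\;(A',\mathcal{B}')^{c_1}_\theta\mid\cdots\mid(A',\mathcal{B}')^{c_n}_\theta\mid S'\rangle$ (the step is labeled $c(\ell(c_1..c_n),\ell(d_1..d_k))$ where $d_1..d_k=\mathsf{clauses}(A',P)$). (choice_fail) if $\mathsf{clauses}(A,P)$ is empty: $\langle(A,\mathcal{B})_\delta\mid S\;]\![\;(A',\mathcal{B}')_\theta\mid S'\rangle\leadsto\langle(\mathsf{fail},\mathcal{B})_\delta\mid S\;]\![\;(\mathsf{fail},\mathcal{B}')_\theta\mid S'\rangle$. (unfold) if $\sigma=\mathrm{mgu}(A,H_1)$ and $\sigma'=\mathrm{mgu}(A',H_1)$: $\langle(A,\mathcal{B})^{H_1\leftarrow\mathcal{B}_1}_\delta\mid S\;]\![\;(A',\mathcal{B}')^{H_1\leftarrow\mathcal{B}_1}_\theta\mid S'\rangle\leadsto\langle(\mathcal{B}_1\sigma,\mathcal{B}\sigma)_{\delta\sigma}\mid S\;]\![\;(\mathcal{B}_1\sigma',\mathcal{B}'\sigma')_{\theta\sigma'}\mid S'\rangle$. *)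

theory Defs
  imports Main
begin

datatype ('f, 'v) trm = Var 'v | Fn 'f "('f, 'v) trm list"

text \<open>Atoms: user atoms p(t1,...,tn) and the special atom fail.
  The special atom true is the neutral element of conjunction and is
  represented by the empty goal.\<close>
datatype ('p, 'f, 'v) atm = Atm 'p "('f, 'v) trm list" | FailA

type_synonym ('p, 'f, 'v) goal = "('p, 'f, 'v) atm list"

datatype ('l, 'p, 'f, 'v) cl =
  Cl (lbl: 'l) (hd_pred: 'p) (hd_args: "('f, 'v) trm list") (cl_body: "('p, 'f, 'v) goal")

type_synonym ('l, 'p, 'f, 'v) prog = "('l, 'p, 'f, 'v) cl list"

definition cl_head :: "('l, 'p, 'f, 'v) cl \<Rightarrow> ('p, 'f, 'v) atm" where
  "cl_head c = Atm (hd_pred c) (hd_args c)"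

type_synonym ('f, 'v) subst = "'v \<Rightarrow> ('f, 'v) trm"

fun tsubst :: "('f, 'v) subst \<Rightarrow> ('f, 'v) trm \<Rightarrow> ('f, 'v) trm" where
  "tsubst \<sigma> (Var x) = \<sigma> x"
| "tsubst \<sigma> (Fn f ts) = Fn f (map (tsubst \<sigma>) ts)"

fun asubst :: "('f, 'v) subst \<Rightarrow> ('p, 'f, 'v) atm \<Rightarrow> ('p, 'f, 'v) atm" where
  "asubst \<sigma> (Atm p ts) = Atm p (map (tsubst \<sigma>) ts)"
| "asubst \<sigma> FailA = FailA"

definition gsubst :: "('f, 'v) subst \<Rightarrow> ('p, 'f, 'v) goal \<Rightarrow> ('p, 'f, 'v) goal" where
  "gsubst \<sigma> B = map (asubst \<sigma>) B"

fun clsubst :: "('f, 'v) subst \<Rightarrow> ('l, 'p, 'f, 'v) cl \<Rightarrow> ('l, 'p, 'f, 'v) cl" where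
  "clsubst \<sigma> (Cl l p us B) = Cl l p (map (tsubst \<sigma>) us) (gsubst \<sigma> B)"

text \<open>Composition: \<delta>\<sigma> means first \<delta> then \<sigma>.\<close>
definition scomp :: "('f, 'v) subst \<Rightarrow> ('f, 'v) subst \<Rightarrow> ('f, 'v) subst" (infixl "\<circ>\<^sub>s" 75) where
  "(\<delta> \<circ>\<^sub>s \<sigma>) x = tsubst \<sigma> (\<delta> x)"

definition atm_more_general :: "('p, 'f, 'v) atm \<Rightarrow> ('p, 'f, 'v) atm \<Rightarrow> bool" where
  "atm_more_general A1 A2 \<longleftrightarrow> (\<exists>\<theta>. asubst \<theta> A1 = A2)"

definition goal_more_general :: "('p, 'f, 'v) goal \<Rightarrow> ('p, 'f, 'v) goal \<Rightarrow> bool" where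
  "goal_more_general B1 B2 \<longleftrightarrow> (\<exists>\<theta>. gsubst \<theta> B1 = B2)"

fun tvars :: "('f, 'v) trm \<Rightarrow> 'v set" where
  "tvars (Var x) = {x}"
| "tvars (Fn f ts) = (\<Union>t \<in> set ts. tvars t)"

fun avars :: "('p, 'f, 'v) atm \<Rightarrow> 'v set" where
  "avars (Atm p ts) = (\<Union>t \<in> set ts. tvars t)"
| "avars FailA = {}"

definition gvars :: "('p, 'f, 'v) goal \<Rightarrow> 'v set" where
  "gvars B = (\<Union>A \<in> set B. avars A)"

definition clvars :: "('l, 'p, 'f, 'v) cl \<Rightarrow> 'v set" where
  "clvars c = (\<Union>t \<in> set (hd_args c). tvars t) \<union> gvars (cl_body c)"

definition sdom :: "('f, 'v) subst \<Rightarrow> 'v set" where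
  "sdom \<sigma> = {x. \<sigma> x \<noteq> Var x}"

definition svars :: "('f, 'v) subst \<Rightarrow> 'v set" where
  "svars \<sigma> = sdom \<sigma> \<union> (\<Union>x \<in> sdom \<sigma>. tvars (\<sigma> x))"

definition variant :: "('l, 'p, 'f, 'v) cl \<Rightarrow> ('l, 'p, 'f, 'v) cl \<Rightarrow> bool" where
  "variant c d \<longleftrightarrow> (\<exists>\<rho> :: 'v \<Rightarrow> 'v. bij \<rho> \<and> d = clsubst (Var \<circ> \<rho>) c)"

definition unifier :: "('f, 'v) subst \<Rightarrow> ('p, 'f, 'v) atm \<Rightarrow> ('p, 'f, 'v) atm \<Rightarrow> bool" where
  "unifier \<sigma> A B \<longleftrightarrow> asubst \<sigma> A = asubst \<sigma> B"

definition unifiable :: "('p, 'f, 'v) atm \<Rightarrow> ('p, 'f, 'v) atm \<Rightarrow> bool" where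
  "unifiable A B \<longleftrightarrow> (\<exists>\<sigma>. unifier \<sigma> A B)"

definition is_mgu :: "('f, 'v) subst \<Rightarrow> ('p, 'f, 'v) atm \<Rightarrow> ('p, 'f, 'v) atm \<Rightarrow> bool" where
  "is_mgu \<sigma> A B \<longleftrightarrow> unifier \<sigma> A B \<and> (\<forall>\<tau>. unifier \<tau> A B \<longrightarrow> (\<exists>\<gamma>. \<tau> = \<sigma> \<circ>\<^sub>s \<gamma>))"

text \<open>clauses(A,P) relative to a set V of variables to avoid: the program
  clauses, renamed apart (from V and from each other), kept in program order,
  filtered to those whose head unifies with A.\<close>
definition clauses_of ::
  "('l, 'p, 'f, 'v) prog \<Rightarrow> 'v set \<Rightarrow> ('p, 'f, 'v) atm \<Rightarrow> ('l, 'p, 'f, 'v) cl list \<Rightarrow> bool" where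
  "clauses_of P V A cs \<longleftrightarrow>
     (\<exists>ds. list_all2 variant P ds
        \<and> (\<forall>d \<in> set ds. clvars d \<inter> V = {})
        \<and> (\<forall>i j. i < length ds \<longrightarrow> j < length ds \<longrightarrow> i \<noteq> j \<longrightarrow> clvars (ds ! i) \<inter> clvars (ds ! j) = {})
        \<and> cs = filter (\<lambda>d. unifiable A (cl_head d)) ds)"

text \<open>Goal items: B_\<delta> or B^c_\<delta> (G B \<delta> None / G B \<delta> (Some c)), SUCCESS_\<delta>, FAIL_\<delta>.\<close>
datatype ('l, 'p, 'f, 'v) gitem =
    G "('p, 'f, 'v) goal" "('f, 'v) subst" "('l, 'p, 'f, 'v) cl option"
  | Succ "('f, 'v) subst"
  | FailF "('f, 'v) subst"

text \<open>A concolic state: (concrete part S, symbolic part S').\<close>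
type_synonym ('l, 'p, 'f, 'v) cstate = "('l, 'p, 'f, 'v) gitem list \<times> ('l, 'p, 'f, 'v) gitem list"

fun gi_vars :: "('l, 'p, 'f, 'v) gitem \<Rightarrow> 'v set" where
  "gi_vars (G B \<delta> c) = gvars B \<union> svars \<delta> \<union> (case c of None \<Rightarrow> {} | Some d \<Rightarrow> clvars d)"
| "gi_vars (Succ \<delta>) = svars \<delta>"
| "gi_vars (FailF \<delta>) = svars \<delta>"

definition st_vars :: "('l, 'p, 'f, 'v) cstate \<Rightarrow> 'v set" where
  "st_vars C = (\<Union>g \<in> set (fst C). gi_vars g) \<union> (\<Union>g \<in> set (snd C). gi_vars g)"

text \<open>Concolic transition relation; V is the set of variables the renamed
  clauses must avoid (all variables used so far in the execution).\<close>
inductive cstep ::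
  "('l, 'p, 'f, 'v) prog \<Rightarrow> 'v set \<Rightarrow> ('l, 'p, 'f, 'v) cstate \<Rightarrow> ('l, 'p, 'f, 'v) cstate \<Rightarrow> bool"
  for P :: "('l, 'p, 'f, 'v) prog" and V :: "'v set"
where
  success:
    "cstep P V (G [] \<delta> None # S, G [] \<theta> None # S') ([Succ \<delta>], [Succ \<theta>])"
| failure:
    "cstep P V ([G (FailA # B) \<delta> None], [G (FailA # B') \<theta> None]) ([FailF \<delta>], [FailF \<theta>])"
| backtrack:
    "S \<noteq> [] \<Longrightarrow>
     cstep P V (G (FailA # B) \<delta> None # S, G (FailA # B') \<theta> None # S') (S, S')"
| choice:
    "A = Atm p ts \<Longrightarrow> clauses_of P V A cs \<Longrightarrow> cs \<noteq> [] \<Longrightarrow>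
     cstep P V (G (A # B) \<delta> None # S, G (A' # B') \<theta> None # S')
       (map (\<lambda>c. G (A # B) \<delta> (Some c)) cs @ S, map (\<lambda>c. G (A' # B') \<theta> (Some c)) cs @ S')"
| choice_fail:
    "A = Atm p ts \<Longrightarrow> clauses_of P V A [] \<Longrightarrow>
     cstep P V (G (A # B) \<delta> None # S, G (A' # B') \<theta> None # S')
       (G (FailA # B) \<delta> None # S, G (FailA # B') \<theta> None # S')"
| unfold:
    "is_mgu \<sigma> A (cl_head c) \<Longrightarrow> is_mgu \<sigma>' A' (cl_head c) \<Longrightarrow>
     cstep P V (G (A # B) \<delta> (Some c) # S, G (A' # B') \<theta> (Some c) # S')
       (G (gsubst \<sigma> (cl_body c @ B)) (\<delta> \<circ>\<^sub>s \<sigma>) None # S,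
        G (gsubst \<sigma>' (cl_body c @ B')) (\<theta> \<circ>\<^sub>s \<sigma>') None # S')"

definition init_state :: "'p \<Rightarrow> ('f, 'v) trm list \<Rightarrow> 'v list \<Rightarrow> ('l, 'p, 'f, 'v) cstate" where
  "init_state p ts xs = ([G [Atm p ts] Var None], [G [Atm p (map Var xs)] Var None])"

text \<open>A finite concolic execution C_0 ~> ... ~> C_m given as a nonempty list;
  renamed clauses at step i avoid all variables of the initial atoms and of C_0..C_i.\<close>
definition cexec ::
  "('l, 'p, 'f, 'v) prog \<Rightarrow> 'v set \<Rightarrow> ('l, 'p, 'f, 'v) cstate list \<Rightarrow> bool" where
  "cexec P V0 Cs \<longleftrightarrow> Cs \<noteq> [] \<and>
     (\<forall>i. Suc i < length Cs \<longrightarrow>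
        cstep P (V0 \<union> (\<Union>j \<le> i. st_vars (Cs ! j))) (Cs ! i) (Cs ! Suc i))"

end

theory Submission
  imports Defs
begin

lemma tsubst_comp: "tsubst (\<sigma> \<circ>\<^sub>s \<tau>) t = tsubst \<tau> (tsubst \<sigma> t)"
  by (induction t) (auto simp: scomp_def)

lemma asubst_comp: "asubst (\<sigma> \<circ>\<^sub>s \<tau>) A = asubst \<tau> (asubst \<sigma> A)"
  by (cases A) (auto simp: tsubst_comp)

lemma gsubst_comp: "gsubst (\<sigma> \<circ>\<^sub>s \<tau>) B = gsubst \<tau> (gsubst \<sigma> B)"
  by (auto simp: gsubst_def asubst_comp)

lemma tsubst_cong: "(\<forall>x\<in>tvars t. \<sigma> x = \<tau> x) \<Longrightarrow> tsubst \<sigma> t = tsubst \<tau> t"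
  by (induction t) auto

lemma asubst_cong: "(\<forall>x\<in>avars A. \<sigma> x = \<tau> x) \<Longrightarrow> asubst \<sigma> A = asubst \<tau> A"
  by (cases A) (auto intro: tsubst_cong)

lemma gsubst_cong: "(\<forall>x\<in>gvars B. \<sigma> x = \<tau> x) \<Longrightarrow> gsubst \<sigma> B = gsubst \<tau> B"
  unfolding gsubst_def gvars_def by (auto intro!: asubst_cong)

lemma tsubst_Var: "tsubst Var t = t"
  by (induction t) (auto simp: map_idI)

lemma asubst_Var: "asubst Var A = A"
  by (cases A) (auto simp: tsubst_Var map_idI)

lemma tvars_subst_var: "tvars (\<sigma> x) \<subseteq> svars \<sigma> \<union> {x}"
  by (cases "\<sigma> x = Var x") (auto simp: svars_def sdom_def)

lemma tvars_tsubst: "tvars (tsubst \<sigma> t) \<subseteq> svars \<sigma> \<union> tvars t"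
  using tvars_subst_var by (induction t) fastforce+

lemma avars_asubst: "avars (asubst \<sigma> A) \<subseteq> svars \<sigma> \<union> avars A"
  using tvars_tsubst by (cases A) fastforce+

definition pinv :: "('p, 'f, 'v) atm \<Rightarrow> ('p, 'f, 'v) atm \<Rightarrow> ('p, 'f, 'v) goal \<Rightarrow> ('f, 'v) subst
   \<Rightarrow> ('l, 'p, 'f, 'v) cl option \<Rightarrow> ('p, 'f, 'v) goal \<Rightarrow> ('f, 'v) subst \<Rightarrow> ('l, 'p, 'f, 'v) cl option \<Rightarrow> bool" where
  "pinv X0 T0 B \<delta> c D \<theta> c' \<longleftrightarrow> c = c' \<and>
     (\<exists>\<tau>. gsubst \<tau> D = B \<and> asubst \<tau> (asubst \<theta> X0) = asubst \<delta> T0) \<and>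
     (\<forall>cl. c = Some cl \<longrightarrow> clvars cl \<inter> (gvars D \<union> avars (asubst \<theta> X0)) = {})"

fun rel where
  "rel X0 T0 (G B \<delta> c) (G D \<theta> c') = pinv X0 T0 B \<delta> c D \<theta> c'"
| "rel X0 T0 (Succ _) (Succ _) = True"
| "rel X0 T0 (FailF _) (FailF _) = True"
| "rel X0 T0 _ _ = False"

lemma gvars_Cons: "gvars (A # B) = avars A \<union> gvars B"
  by (simp add: gvars_def)

lemma step_inv:
  fixes C C' :: "('l, 'p, 'f, 'v) cstate"
  assumes "cstep P V C C'"
    and "list_all2 (rel X0 T0) (fst C) (snd C)"
    and "st_vars C \<union> avars X0 \<subseteq> V"
  shows "list_all2 (rel X0 T0) (fst C') (snd C')"
  using assms
proof (induction rule: cstep.induct)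
  case (success \<delta> S \<theta> S')
  then show ?case by simp
next
  case (failure B \<delta> B' \<theta>)
  then show ?case by simp
next
  case (backtrack S B \<delta> B' \<theta> S')
  then show ?case by simp
next
  case (choice A p ts cs B \<delta> S A' B' \<theta> S')
  from choice.hyps(2) obtain ds where ds: "\<forall>d \<in> set ds. clvars d \<inter> V = {}"
    "cs = filter (\<lambda>d. unifiable A (cl_head d)) ds" unfolding clauses_of_def by blast
  have pv: "pinv X0 T0 (A # B) \<delta> (None :: ('l, 'p, 'f, 'v) cl option) (A' # B') \<theta> None" using choice.prems(1) by simp
  have sub: "gvars (A' # B') \<union> avars (asubst \<theta> X0) \<subseteq> V"
    using choice.prems(2) avars_asubst[of \<theta> X0]
    by (auto simp: st_vars_def)
  have "\<forall>c\<in>set cs. pinv X0 T0 (A # B) \<delta> (Some c) (A' # B') \<theta> (Some c)"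
    using pv ds sub unfolding pinv_def by auto
  then have "list_all2 (rel X0 T0) (map (\<lambda>c. G (A # B) \<delta> (Some c)) cs) (map (\<lambda>c. G (A' # B') \<theta> (Some c)) cs)"
    by (auto simp: list_all2_map1 list_all2_map2 list_all2_same)
  moreover have "list_all2 (rel X0 T0) S S'" using choice.prems(1) by simp
  ultimately show ?case by (simp add: list_all2_appendI)
next
  case (choice_fail A p ts B \<delta> S A' B' \<theta> S')
  then show ?case by (auto simp: pinv_def gsubst_def)
next
  case (unfold \<sigma> A c \<sigma>' A' B \<delta> S B' \<theta> S')
  from unfold.prems(1) obtain \<tau> where
    t1: "gsubst \<tau> (A' # B') = A # B" and t2: "asubst \<tau> (asubst \<theta> X0) = asubst \<delta> T0"
    and dis: "clvars c \<inter> (gvars (A' # B') \<union> avars (asubst \<theta> X0)) = {}"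
    and rS: "list_all2 (rel X0 T0) S S'"
    by (auto simp: pinv_def)
  define \<tau>' where "\<tau>' x = (if x \<in> clvars c then Var x else \<tau> x)" for x
  have e1: "gsubst \<tau>' (A' # B') = A # B"
    using t1 dis by (subst gsubst_cong[of _ _ \<tau>]) (auto simp: \<tau>'_def)
  have e2: "asubst \<tau>' (asubst \<theta> X0) = asubst \<delta> T0"
    using t2 dis by (subst asubst_cong[of _ _ \<tau>]) (auto simp: \<tau>'_def)
  have hv: "avars (cl_head c) \<subseteq> clvars c"
    by (auto simp: cl_head_def clvars_def)
  have e3: "asubst \<tau>' (cl_head c) = cl_head c"
    using hv by (subst asubst_cong[of _ _ Var]) (auto simp: \<tau>'_def asubst_Var)
  have e4: "gsubst \<tau>' (cl_body c) = cl_body c"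
    by (subst gsubst_cong[of _ _ Var]) (auto simp: \<tau>'_def clvars_def gsubst_def asubst_Var map_idI)
  have eA: "asubst \<tau>' A' = A" and eB: "gsubst \<tau>' B' = B"
    using e1 by (auto simp: gsubst_def)
  have u: "asubst \<sigma> A = asubst \<sigma> (cl_head c)"
    using unfold.hyps(1) by (simp add: is_mgu_def unifier_def)
  have "unifier (\<tau>' \<circ>\<^sub>s \<sigma>) A' (cl_head c)"
    unfolding unifier_def asubst_comp eA e3 using u .
  then obtain \<gamma> where g: "\<tau>' \<circ>\<^sub>s \<sigma> = \<sigma>' \<circ>\<^sub>s \<gamma>"
    using unfold.hyps(2) by (auto simp: is_mgu_def)
  have r1: "gsubst \<gamma> (gsubst \<sigma>' (cl_body c @ B')) = gsubst \<sigma> (cl_body c @ B)"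
  proof -
    have "gsubst \<gamma> (gsubst \<sigma>' (cl_body c @ B')) = gsubst (\<tau>' \<circ>\<^sub>s \<sigma>) (cl_body c @ B')"
      by (simp add: g gsubst_comp)
    also have "\<dots> = gsubst \<sigma> (gsubst \<tau>' (cl_body c @ B'))"
      by (simp add: gsubst_comp)
    also have "gsubst \<tau>' (cl_body c @ B') = cl_body c @ B"
      using e4 eB by (simp add: gsubst_def)
    finally show ?thesis .
  qed
  have r2: "asubst \<gamma> (asubst (\<theta> \<circ>\<^sub>s \<sigma>') X0) = asubst (\<delta> \<circ>\<^sub>s \<sigma>) T0"
  proof -
    have "asubst \<gamma> (asubst (\<theta> \<circ>\<^sub>s \<sigma>') X0) = asubst (\<sigma>' \<circ>\<^sub>s \<gamma>) (asubst \<theta> X0)"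
      by (simp add: asubst_comp)
    also have "\<dots> = asubst \<sigma> (asubst \<tau>' (asubst \<theta> X0))"
      by (simp add: g[symmetric] asubst_comp)
    also have "\<dots> = asubst (\<delta> \<circ>\<^sub>s \<sigma>) T0"
      by (simp add: e2 asubst_comp)
    finally show ?thesis .
  qed
  have "pinv X0 T0 (gsubst \<sigma> (cl_body c @ B)) (\<delta> \<circ>\<^sub>s \<sigma>) None
          (gsubst \<sigma>' (cl_body c @ B')) (\<theta> \<circ>\<^sub>s \<sigma>') None"
    unfolding pinv_def using r1 r2 by blast
  then show ?case using rS by simp
qed

theorem theorem1:
  fixes P :: "('l, 'p, 'f, 'v) prog"
    and p :: 'p and ts :: "('f, 'v) trm list" and xs :: "'v list"
    and Cs :: "('l, 'p, 'f, 'v) cstate list"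
  assumes "distinct (map lbl P)"
    and "length xs = length ts"
    and "distinct xs"
    and "set xs \<inter> avars (Atm p ts) = {}"
    and "cexec P (avars (Atm p ts) \<union> set xs) Cs"
    and "Cs ! 0 = init_state p ts xs"
  shows "\<forall>i < length Cs. \<forall>B \<delta> c S D \<theta> c' S'.
           Cs ! i = (G B \<delta> c # S, G D \<theta> c' # S') \<longrightarrow>
             length S = length S'
           \<and> goal_more_general D B
           \<and> c = c'
           \<and> atm_more_general (asubst \<theta> (Atm p (map Var xs))) (asubst \<delta> (Atm p ts))"
proof -
  let ?X0 = "Atm p (map Var xs) :: ('p, 'f, 'v) atm"
  let ?T0 = "Atm p ts"
  define \<tau> where "\<tau> x = (case map_of (zip xs ts) x of Some t \<Rightarrow> t | None \<Rightarrow> Var x)" for x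
  have mt: "map \<tau> xs = ts"
  proof (rule nth_equalityI)
    show "length (map \<tau> xs) = length ts" using assms(2) by simp
    fix i assume "i < length (map \<tau> xs)"
    then show "map \<tau> xs ! i = ts ! i"
      using map_of_zip_nth[OF assms(2) assms(3)] assms(2) by (simp add: \<tau>_def)
  qed
  have av: "avars ?X0 = set xs" by auto
  have init: "list_all2 (rel ?X0 ?T0) (fst (Cs ! 0)) (snd (Cs ! 0))"
  proof -
    have "asubst \<tau> ?X0 = ?T0" using mt by (simp add: comp_def)
    then have "pinv ?X0 ?T0 [?T0] Var None [?X0] Var None"
      unfolding pinv_def by (intro conjI exI[of _ \<tau>]) (auto simp: gsubst_def asubst_Var tsubst_Var)
    then show ?thesis using assms(6) by (simp add: init_state_def)
  qed
  have ex: "Cs \<noteq> []" and st: "\<And>i. Suc i < length Cs \<Longrightarrow>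
        cstep P (avars ?T0 \<union> set xs \<union> (\<Union>j \<le> i. st_vars (Cs ! j))) (Cs ! i) (Cs ! Suc i)"
    using assms(5) unfolding cexec_def by auto
  have all: "\<forall>i < length Cs. list_all2 (rel ?X0 ?T0) (fst (Cs ! i)) (snd (Cs ! i))"
  proof (intro allI impI)
    fix i assume "i < length Cs"
    then show "list_all2 (rel ?X0 ?T0) (fst (Cs ! i)) (snd (Cs ! i))"
    proof (induction i)
      case 0 then show ?case using init by simp
    next
      case (Suc i)
      show ?case
      proof (rule step_inv[OF st[OF Suc.prems]])
        show "list_all2 (rel ?X0 ?T0) (fst (Cs ! i)) (snd (Cs ! i))"
          using Suc by simp
        show "st_vars (Cs ! i) \<union> avars ?X0 \<subseteq> avars ?T0 \<union> set xs \<union> (\<Union>j \<le> i. st_vars (Cs ! j))"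
          using av by auto
      qed
    qed
  qed
  show ?thesis
  proof (intro allI impI)
    fix i B \<delta> c S D \<theta> c' S'
    assume i: "i < length Cs" and e: "Cs ! i = (G B \<delta> c # S, G D \<theta> c' # S')"
    from all i e have "list_all2 (rel ?X0 ?T0) (G B \<delta> c # S) (G D \<theta> c' # S')" by force
    then show "length S = length S' \<and> goal_more_general D B \<and> c = c'
           \<and> atm_more_general (asubst \<theta> ?X0) (asubst \<delta> ?T0)"
      by (auto simp: pinv_def goal_more_general_def atm_more_general_def list_all2_lengthD)
  qed
qed

end
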